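(* Let $E:\mathcal{H}\to\mathbb{R}$ be of class $C^2$ and let $R:\mathcal{H}\to\mathcal{H}$ be a retraction of class $C^2$ such that for all $P\in\mathcal{M}_N$ and all $X\in\mathcal{H}$ small enough, $R(P+X)\in\mathcal{M}_N$ and $R(P+X)=P+\Pi_P(X)+O(X^2)$. Then there exists $\beta_0>0$ such that for all $0<\beta\le\beta_0$ and all $P^0\in\mathcal{M}_N$, the iterates \[ P^{k+1}:=R\big(P^k-\beta\,\Pi_{P^k}(\nabla E(P^k))\big) \] satisfy: (1) $(E(P^k))_{k\in\mathbb{N}}$ is a nonincreasing sequence converging to some critical value $E_{\rm c}$ of $E$ on $\mathcal{M}_N$; (2) as $k\to\infty$, $\Pi_{P^k}\nabla E(P^k)\to 0$, $\|P^{k+1}-P^k\|_{\rm F}\to 0$, and $d(P^k,A_{\rm c})\to0$, where $A_{\rm c}$ is one of the connected components of $C(E_{\rm c}):=\{P\in\mathcal{M}_N\mid E(P)=E_{\rm c}\text{ and }\Pi_P(\nabla E(P))=0\}$.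
   Context: $\mathcal{H}$ denotes the space of real symmetric $N_b\times N_b$ matrices with the Frobenius inner product $\langle A,B\rangle_{\rm F}=\mathrm{Tr}(AB)$ and norm $\|\cdot\|_{\rm F}$; $d$ is the associated distance. For an integer $1\le N\le N_b$, $\mathcal{M}_N:=\{P\in\mathcal{H}\mid P^2=P,\ \mathrm{Tr}(P)=N\}$ (rank-$N$ orthogonal projectors). For $P\in\mathcal{M}_N$, $\Pi_P:\mathcal{H}\to\mathcal{H}$, $\Pi_P(X)=PX(1-P)+(1-P)XP$, is the Frobenius-orthogonal projection onto the tangent space $T_P\mathcal{M}_N=\{X\in\mathcal{H}\mid PXP=(1-P)X(1-P)=0\}$. $\nabla E$ is the Frobenius gradient of $E$. A critical point of $E$ on $\mathcal{M}_N$ is a $P\in\mathcal{M}_N$ with $\Pi_P(\nabla E(P))=0$, and a critical value is the value of $E$ at a critical point. *)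

theory Defs
  imports "HOL-Analysis.Analysis"
begin

text \<open>Real N_b x N_b matrices are real^'n^'n with N_b = CARD('n). The Euclidean inner
product and norm of this type are the Frobenius ones (sum over all entries).\<close>

definition symm :: "real^'n^'n \<Rightarrow> bool" where
  "symm A \<longleftrightarrow> transpose A = A"

definition MN :: "nat \<Rightarrow> (real^'n^'n) set" where
  "MN N = {P. symm P \<and> P ** P = P \<and> trace P = real N}"

definition PiP :: "real^'n^'n \<Rightarrow> real^'n^'n \<Rightarrow> real^'n^'n" where
  "PiP P X = P ** X ** (mat 1 - P) + (mat 1 - P) ** X ** P"

definition C2 :: "('a::euclidean_space \<Rightarrow> 'b::real_normed_vector) \<Rightarrow> bool" where
  "C2 f \<longleftrightarrow> (\<exists>f' f''. (\<forall>x. (f has_derivative blinfun_apply (f' x)) (at x))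
      \<and> (\<forall>x. (f' has_derivative blinfun_apply (f'' x)) (at x))
      \<and> continuous_on UNIV f'')"

definition gradH :: "(real^'n^'n \<Rightarrow> real) \<Rightarrow> real^'n^'n \<Rightarrow> real^'n^'n" where
  "gradH E A = (THE G. symm G \<and> (\<forall>X. symm X \<longrightarrow> frechet_derivative E (at A) X = G \<bullet> X))"

definition critical_point :: "nat \<Rightarrow> (real^'n^'n \<Rightarrow> real) \<Rightarrow> real^'n^'n \<Rightarrow> bool" where
  "critical_point N E P \<longleftrightarrow> P \<in> MN N \<and> PiP P (gradH E P) = 0"

definition critical_value :: "nat \<Rightarrow> (real^'n^'n \<Rightarrow> real) \<Rightarrow> real \<Rightarrow> bool" where
  "critical_value N E c \<longleftrightarrow> (\<exists>P. critical_point N E P \<and> E P = c)"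

definition crit_set :: "nat \<Rightarrow> (real^'n^'n \<Rightarrow> real) \<Rightarrow> real \<Rightarrow> (real^'n^'n) set" where
  "crit_set N E c = {P. P \<in> MN N \<and> E P = c \<and> PiP P (gradH E P) = 0}"

primrec rgd_iter :: "(real^'n^'n \<Rightarrow> real) \<Rightarrow> (real^'n^'n \<Rightarrow> real^'n^'n) \<Rightarrow> real
    \<Rightarrow> real^'n^'n \<Rightarrow> nat \<Rightarrow> real^'n^'n" where
  "rgd_iter E R \<beta> P0 0 = P0"
| "rgd_iter E R \<beta> P0 (Suc k) =
     (let P = rgd_iter E R \<beta> P0 k in R (P - \<beta> *\<^sub>R PiP P (gradH E P)))"

end

theory Submission
  imports Defs
begin



lemma matrix_add_rdistrib: "((A::real^'m^'n) + B) ** (C::real^'p^'m) = A ** C + B ** C"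
  by (simp add: matrix_matrix_mult_def vec_eq_iff sum.distrib distrib_right)

lemma matrix_sub_ldistrib: "(A::real^'m^'n) ** ((B::real^'p^'m) - C) = A ** B - A ** C"
  by (simp add: eq_diff_eq flip: matrix_add_ldistrib)

lemma matrix_sub_rdistrib: "((A::real^'m^'n) - B) ** (C::real^'p^'m) = A ** C - B ** C"
  by (simp add: eq_diff_eq flip: matrix_add_rdistrib)

lemma transpose_add: "transpose ((A::real^'m^'n) + B) = transpose A + transpose B"
  by (simp add: transpose_def vec_eq_iff)

lemma transpose_sub: "transpose ((A::real^'m^'n) - B) = transpose A - transpose B"
  by (simp add: transpose_def vec_eq_iff)

lemma inner_trace: "(A::real^'n^'n) \<bullet> B = trace (transpose A ** B)"
proof -
  have "(A::real^'n^'n) \<bullet> B = (\<Sum>k\<in>UNIV. \<Sum>i\<in>UNIV. A$k$i * B$k$i)"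
    unfolding inner_vec_def by (simp add: inner_real_def)
  also have "\<dots> = (\<Sum>i\<in>UNIV. \<Sum>k\<in>UNIV. A$k$i * B$k$i)" by (rule sum.swap)
  also have "\<dots> = trace (transpose A ** B)"
    unfolding trace_def matrix_matrix_mult_def transpose_def by simp
  finally show ?thesis .
qed

lemma inner_mult_left: "((A::real^'n^'n) ** (B::real^'n^'n)) \<bullet> (C::real^'n^'n) = B \<bullet> (transpose A ** C)"
  unfolding inner_trace matrix_transpose_mul by (simp add: matrix_mul_assoc)

lemma inner_mult_right: "((A::real^'n^'n) ** (B::real^'n^'n)) \<bullet> (C::real^'n^'n) = A \<bullet> (C ** transpose B)"
  by (metis inner_trace matrix_mul_assoc matrix_transpose_mul trace_mul_sym)

lemma Q_facts:
  fixes P :: "real^'n^'n"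
  assumes "P ** P = P"
  shows "P ** (mat 1 - P) = 0" "(mat 1 - P) ** P = 0" "(mat 1 - P) ** (mat 1 - P) = mat 1 - P"
  using assms by (simp_all add: matrix_sub_ldistrib matrix_sub_rdistrib)

lemma PiP_alt: "PiP P X = P ** X ** Q + Q ** X ** P" if "Q = mat 1 - P"
  using that by (simp add: PiP_def)

lemma PiP_idem:
  fixes P :: "real^'n^'n"
  assumes "P ** P = P"
  shows "PiP P (PiP P X) = PiP P X"
proof -
  define Q where "Q = mat 1 - P"
  have f: "P ** Q = 0" "Q ** P = 0" "Q ** Q = Q" using Q_facts[OF assms] by (simp_all add: Q_def)
  have 1: "P ** (P ** X ** Q + Q ** X ** P) ** Q = P ** X ** Q"
  proof -
    have "P ** (P ** X ** Q + Q ** X ** P) ** Q = (P ** P) ** X ** (Q ** Q) + (P ** Q) ** X ** (P ** Q)"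
      by (simp only: matrix_add_ldistrib matrix_add_rdistrib matrix_mul_assoc)
    also have "\<dots> = P ** X ** Q" by (simp add: f assms)
    finally show ?thesis .
  qed
  have 2: "Q ** (P ** X ** Q + Q ** X ** P) ** P = Q ** X ** P"
  proof -
    have "Q ** (P ** X ** Q + Q ** X ** P) ** P = (Q ** P) ** X ** (Q ** P) + (Q ** Q) ** X ** (P ** P)"
      by (simp only: matrix_add_ldistrib matrix_add_rdistrib matrix_mul_assoc)
    also have "\<dots> = Q ** X ** P" by (simp add: f assms)
    finally show ?thesis .
  qed
  show ?thesis unfolding PiP_alt[OF Q_def] 1 2 by (rule refl)
qed

lemma transpose_Q: "symm P \<Longrightarrow> transpose (mat 1 - P) = mat 1 - (P::real^'n^'n)"
  by (simp add: symm_def transpose_sub)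

lemma PiP_symm:
  fixes P X :: "real^'n^'n"
  assumes "symm P" "symm X"
  shows "symm (PiP P X)"
proof -
  have tQ: "transpose (mat 1 - P) = mat 1 - P" using transpose_Q[OF assms(1)] .
  have tP: "transpose P = P" "transpose X = X" using assms by (auto simp: symm_def)
  show ?thesis unfolding symm_def PiP_def transpose_add matrix_transpose_mul tQ tP
    by (simp add: matrix_mul_assoc add.commute)
qed

lemma PiP_selfadj:
  fixes P A B :: "real^'n^'n"
  assumes "symm P"
  shows "PiP P A \<bullet> B = A \<bullet> PiP P B"
proof -
  have tQ: "transpose (mat 1 - P) = mat 1 - P" using transpose_Q[OF assms(1)] .
  have tP: "transpose P = P" using assms by (auto simp: symm_def)
  have gen: "(M ** A ** K) \<bullet> B = A \<bullet> (transpose M ** B ** transpose K)" for M K :: "real^'n^'n"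
  proof -
    have "(M ** A ** K) \<bullet> B = (M ** A) \<bullet> (B ** transpose K)" by (rule inner_mult_right)
    also have "\<dots> = A \<bullet> (transpose M ** (B ** transpose K))" by (rule inner_mult_left)
    finally show ?thesis by (simp add: matrix_mul_assoc)
  qed
  have 1: "(P ** A ** (mat 1 - P)) \<bullet> B = A \<bullet> (P ** B ** (mat 1 - P))"
    using gen[of P "mat 1 - P"] tQ tP by simp
  have 2: "((mat 1 - P) ** A ** P) \<bullet> B = A \<bullet> ((mat 1 - P) ** B ** P)"
    using gen[of "mat 1 - P" P] tQ tP by simp
  show ?thesis unfolding PiP_def inner_add_left inner_add_right 1 2 ..
qed

lemma PiP_inner_self:
  fixes P g :: "real^'n^'n"
  assumes "symm P" "P ** P = P"
  shows "g \<bullet> PiP P g = (norm (PiP P g))\<^sup>2"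
proof -
  have "(norm (PiP P g))\<^sup>2 = PiP P g \<bullet> PiP P g" by (simp add: power2_norm_eq_inner)
  also have "\<dots> = g \<bullet> PiP P (PiP P g)" by (rule PiP_selfadj[OF assms(1)])
  also have "\<dots> = g \<bullet> PiP P g" by (simp add: PiP_idem[OF assms(2)])
  finally show ?thesis by simp
qed

lemma PiP_scale: "PiP P (c *\<^sub>R X) = c *\<^sub>R PiP P (X::real^'n^'n)"
  unfolding PiP_def by (simp add: matrix_scalar_ac scalar_matrix_assoc[symmetric] scaleR_add_right)

lemma MN_symm: "P \<in> MN N \<Longrightarrow> symm P" and MN_idem: "P \<in> MN N \<Longrightarrow> P ** P = P"
  by (auto simp: MN_def)

lemma MN_norm: "P \<in> MN N \<Longrightarrow> norm (P::real^'n^'n) = sqrt (real N)"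
proof -
  assume "P \<in> MN N"
  then have "symm P" "P ** P = P" "trace P = real N" by (auto simp: MN_def)
  then have "P \<bullet> P = real N" by (simp add: inner_trace symm_def)
  then show ?thesis by (simp add: norm_eq_sqrt_inner)
qed

lemma continuous_on_mmult[continuous_intros]:
  fixes f g :: "'a::topological_space \<Rightarrow> real^'n^'n"
  assumes "continuous_on S f" "continuous_on S g"
  shows "continuous_on S (\<lambda>x. f x ** g x)"
  unfolding matrix_matrix_mult_def
  by (intro continuous_intros continuous_on_component assms)

lemma continuous_on_transpose[continuous_intros]:
  fixes f :: "'a::topological_space \<Rightarrow> real^'n^'n"
  assumes "continuous_on S f"
  shows "continuous_on S (\<lambda>x. transpose (f x))"
  unfolding transpose_def
  by (intro continuous_intros continuous_on_component assms)

lemma continuous_on_trace[continuous_intros]: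
  fixes f :: "'a::topological_space \<Rightarrow> real^'n^'n"
  assumes "continuous_on S f"
  shows "continuous_on S (\<lambda>x. trace (f x))"
  unfolding trace_def
  by (intro continuous_intros continuous_on_component assms)

lemma compact_MN: "compact (MN N :: (real^'n^'n) set)"
unfolding compact_eq_bounded_closed proof
  show "bounded (MN N :: (real^'n^'n) set)"
    unfolding bounded_iff using MN_norm by (metis order_refl)
  have "MN N = {P::real^'n^'n. transpose P = P} \<inter> {P. P ** P = P} \<inter> {P. trace P = real N}"
    by (auto simp: MN_def symm_def)
  also have "closed \<dots>"
    by (intro closed_Int closed_Collect_eq continuous_intros)
  finally show "closed (MN N :: (real^'n^'n) set)" .
qed



lemma C2_cont_deriv:
  assumes "\<forall>x. (f' has_derivative blinfun_apply (f'' x)) (at x)"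
  shows "continuous_on UNIV f'"
  using assms by (metis continuous_on_eq_continuous_within has_derivative_continuous)

lemma C2_taylor:
  fixes f :: "'a::euclidean_space \<Rightarrow> 'b::real_normed_vector"
  assumes f': "\<forall>x. (f has_derivative blinfun_apply (f' x)) (at x)"
    and f'': "\<forall>x. (f' has_derivative blinfun_apply (f'' x)) (at x)"
    and cont: "continuous_on UNIV f''" and K: "compact K" "convex K"
  shows "\<exists>M\<ge>0. \<forall>x\<in>K. \<forall>y\<in>K. norm (f y - f x - f' x (y - x)) \<le> M * (norm (y - x))\<^sup>2"
proof -
  have "compact (f'' ` K)" using K(1) cont by (meson compact_continuous_image continuous_on_subset subset_UNIV)
  then obtain B where B: "\<forall>z\<in>K. norm (f'' z) \<le> B"
    using compact_imp_bounded bounded_iff by (metis image_eqI)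
  show ?thesis
  proof (intro exI[of _ "max B 0"] conjI ballI)
    fix x y assume x: "x \<in> K" and y: "y \<in> K"
    let ?S = "closed_segment x y"
    have SK: "?S \<subseteq> K" using x y K(2) by (rule closed_segment_subset)
    have lip: "norm (f' z - f' x) \<le> B * norm (z - x)" if "z \<in> ?S" for z
    proof (rule differentiable_bound[where S="?S" and f'="\<lambda>z. blinfun_apply (f'' z)"])
      show "convex ?S" by simp
      show "(f' has_derivative blinfun_apply (f'' u)) (at u within ?S)" for u
        using f'' has_derivative_at_withinI by blast
      show "onorm (blinfun_apply (f'' u)) \<le> B" if "u \<in> ?S" for u
        using B SK that by (auto simp: norm_blinfun.rep_eq[symmetric])
      show "z \<in> ?S" by fact
      show "x \<in> ?S" by simp
    qed
    have "norm (f y - f x - f' x (y - x)) \<le> norm (y - x) * (max B 0 * norm (y - x))"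
    proof (rule differentiable_bound_linearization[where S="?S" and f'="\<lambda>z. blinfun_apply (f' z)"])
      show "x + t *\<^sub>R (y - x) \<in> ?S" if "t \<in> {0..1}" for t
        using that unfolding in_segment by (intro exI[of _ t]) (auto simp: algebra_simps)
      show "(f has_derivative blinfun_apply (f' u)) (at u within ?S)" for u
        using f' has_derivative_at_withinI by blast
      show "x \<in> ?S" by simp
      show "onorm (blinfun_apply (f' u) - blinfun_apply (f' x)) \<le> max B 0 * norm (y - x)" if "u \<in> ?S" for u
      proof -
        have "onorm (blinfun_apply (f' u) - blinfun_apply (f' x)) = norm (f' u - f' x)"
          by (simp add: norm_blinfun.rep_eq minus_blinfun.rep_eq fun_diff_def)
        also have "\<dots> \<le> B * norm (u - x)" using lip that by blast
        also have "\<dots> \<le> max B 0 * norm (y - x)"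
          using segment_bound(1)[OF that] by (intro mult_mono) auto
        finally show ?thesis .
      qed
    qed
    then show "norm (f y - f x - f' x (y - x)) \<le> max B 0 * (norm (y - x))\<^sup>2"
      by (simp add: power2_eq_square mult_ac)
  qed simp
qed



lemma trace_transpose: "trace (transpose (A::real^'n^'n)) = trace A"
  by (simp add: trace_def transpose_def)

lemma inner_transpose: "transpose (A::real^'n^'n) \<bullet> B = A \<bullet> transpose B"
proof -
  have "trace (transpose A ** transpose B) = trace (transpose (B ** A))" by (simp add: matrix_transpose_mul)
  also have "\<dots> = trace (B ** A)" by (rule trace_transpose)
  also have "\<dots> = trace (A ** B)" by (rule trace_mul_sym)
  finally have "trace (transpose A ** transpose B) = trace (A ** B)" .
  then show ?thesis unfolding inner_trace by simp
qed

definition gradE :: "((real^'n^'n) \<Rightarrow>\<^sub>L real) \<Rightarrow> real^'n^'n" where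
  "gradE D = (let G = (\<Sum>b\<in>Basis. blinfun_apply D b *\<^sub>R b) in (1/2) *\<^sub>R (G + transpose G))"

lemma gradE_inner:
  fixes D :: "(real^'n^'n) \<Rightarrow>\<^sub>L real"
  assumes "symm X"
  shows "gradE D \<bullet> X = blinfun_apply D X"
proof -
  define G where "G = (\<Sum>b\<in>(Basis::(real^'n^'n) set). blinfun_apply D b *\<^sub>R b)"
  have GX: "G \<bullet> X = blinfun_apply D X"
  proof -
    have "blinfun_apply D X = blinfun_apply D (\<Sum>b\<in>Basis. (X \<bullet> b) *\<^sub>R b)" by (simp add: euclidean_representation)
    also have "\<dots> = (\<Sum>b\<in>Basis. (X \<bullet> b) * blinfun_apply D b)" by (simp add: blinfun.sum_right blinfun.scaleR_right)
    also have "\<dots> = G \<bullet> X" unfolding G_def by (simp add: inner_sum_right inner_commute mult.commute)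
    finally show ?thesis by simp
  qed
  have "transpose G \<bullet> X = G \<bullet> X" using assms by (simp add: inner_transpose symm_def)
  then show ?thesis unfolding gradE_def G_def[symmetric] Let_def
    by (simp add: inner_add_left GX)
qed

lemma gradE_symm: "symm (gradE D)"
  unfolding gradE_def Let_def symm_def by (simp add: transpose_scalar transpose_add add.commute)

lemma gradH_eq:
  assumes "(E has_derivative blinfun_apply D) (at A)"
  shows "gradH E A = gradE D"
  unfolding gradH_def
proof (rule the_equality)
  have fd: "frechet_derivative E (at A) = blinfun_apply D" using frechet_derivative_at[OF assms] by simp
  show "symm (gradE D) \<and> (\<forall>X. symm X \<longrightarrow> frechet_derivative E (at A) X = gradE D \<bullet> X)"
    unfolding fd
  proof (intro conjI allI impI)
    show "symm (gradE D)" by (rule gradE_symm)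
    fix X :: "real^'a^'a" assume "symm X"
    then show "blinfun_apply D X = gradE D \<bullet> X" by (simp add: gradE_inner)
  qed
  fix G assume G: "symm G \<and> (\<forall>X. symm X \<longrightarrow> frechet_derivative E (at A) X = G \<bullet> X)"
  have s: "symm (G - gradE D)" using G gradE_symm by (auto simp: symm_def transpose_sub)
  have a: "frechet_derivative E (at A) (G - gradE D) = G \<bullet> (G - gradE D)" using G s by blast
  have b: "gradE D \<bullet> (G - gradE D) = blinfun_apply D (G - gradE D)" by (rule gradE_inner[OF s])
  have "(G - gradE D) \<bullet> (G - gradE D) = 0"
    unfolding inner_diff_left using a b fd by simp
  then show "G = gradE D" by simp
qed

lemma continuous_gradE:
  assumes "continuous_on UNIV D"
  shows "continuous_on UNIV (\<lambda>A. gradE (D A :: (real^'n^'n) \<Rightarrow>\<^sub>L real))"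
  unfolding gradE_def Let_def transpose_def
  by (intro continuous_intros continuous_on_component assms)



lemma half_le: "(m::real) \<le> b \<Longrightarrow> 0 < b \<Longrightarrow> m / 2 \<le> b" by linarith

lemma symm_0: "symm (0::real^'n^'n)"
  by (simp add: symm_def transpose_def vec_eq_iff)

lemma symm_scale: "symm X \<Longrightarrow> symm (c *\<^sub>R (X::real^'n^'n))"
  by (simp add: symm_def transpose_scalar)

lemma PiP_0: "PiP P (0::real^'n^'n) = 0"
  by (simp add: PiP_def)

lemma retr_fix:
  fixes R :: "real^'n^'n \<Rightarrow> real^'n^'n"
  assumes loc: "\<exists>\<delta>>0. \<exists>C. \<forall>X. symm X \<and> norm X < \<delta> \<longrightarrow>
                    R (P + X) \<in> MN N \<and> norm (R (P + X) - P - PiP P X) \<le> C * (norm X)\<^sup>2"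
  shows "R P = P"
proof -
  from loc obtain \<delta> C where d: "\<delta> > 0" and H: "\<forall>X. symm X \<and> norm X < \<delta> \<longrightarrow>
                    R (P + X) \<in> MN N \<and> norm (R (P + X) - P - PiP P X) \<le> C * (norm X)\<^sup>2" by blast
  have "R (P + 0) \<in> MN N \<and> norm (R (P + 0) - P - PiP P 0) \<le> C * (norm (0::real^'n^'n))\<^sup>2"
  proof -
    have h0: "symm (0::real^'n^'n) \<and> norm (0::real^'n^'n) < \<delta>" using d symm_0 by simp
    show ?thesis by (rule H[rule_format, OF h0])
  qed
  then show ?thesis by (simp add: PiP_0)
qed

lemma retr_deriv:
  fixes R :: "real^'n^'n \<Rightarrow> real^'n^'n"
  assumes R': "(R has_derivative blinfun_apply D) (at P)"
    and loc: "\<exists>\<delta>>0. \<exists>C. \<forall>X. symm X \<and> norm X < \<delta> \<longrightarrow>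
                    R (P + X) \<in> MN N \<and> norm (R (P + X) - P - PiP P X) \<le> C * (norm X)\<^sup>2"
    and X: "symm X"
  shows "blinfun_apply D X = PiP P X"
proof -
  from loc obtain \<delta> C0 where d: "\<delta> > 0" and H: "\<forall>X. symm X \<and> norm X < \<delta> \<longrightarrow>
                    R (P + X) \<in> MN N \<and> norm (R (P + X) - P - PiP P X) \<le> C0 * (norm X)\<^sup>2" by blast
  define C where "C = \<bar>C0\<bar> + 1"
  have C: "C > 0" and HC: "\<forall>X. symm X \<and> norm X < \<delta> \<longrightarrow> norm (R (P + X) - P - PiP P X) \<le> C * (norm X)\<^sup>2"
    using H unfolding C_def by (auto intro: order_trans[OF _ mult_right_mono[of C0 "\<bar>C0\<bar> + 1"]])
  have RP: "R P = P" by (rule retr_fix[OF loc])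
  define v where "v = blinfun_apply D X - PiP P X"
  define nx where "nx = norm X + 1"
  have nx: "nx > 0" "norm X \<le> nx" using norm_ge_zero[of X] unfolding nx_def by linarith+
  have "norm v \<le> \<epsilon>" if eps: "\<epsilon> > 0" for \<epsilon>
  proof -
    have "\<exists>d>0. \<forall>y. norm (y - P) < d \<longrightarrow> norm (R y - R P - blinfun_apply D (y - P)) \<le> (\<epsilon> / (2 * nx)) * norm (y - P)"
    proof -
      have "\<epsilon> / (2 * nx) > 0" using eps nx by simp
      then show ?thesis using R' unfolding has_derivative_at_alt by blast
    qed
    then obtain d where d0: "d > 0" and dH: "\<forall>y. norm (y - P) < d \<longrightarrow> norm (R y - R P - blinfun_apply D (y - P)) \<le> (\<epsilon> / (2 * nx)) * norm (y - P)"
      by blast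
    define t where "t = min (min d \<delta>) (\<epsilon> / (2 * C * nx)) / (2 * nx)"
    have t0: "t > 0" unfolding t_def using d0 d eps C nx by auto
    have tnx: "t * nx < min d \<delta>"
    proof -
      have "t * nx = min (min d \<delta>) (\<epsilon> / (2 * C * nx)) / 2" unfolding t_def using nx by auto
      also have "\<dots> < min d \<delta>" using d0 d eps C nx by (auto simp: min_def)
      finally show ?thesis .
    qed
    have tnx2: "t * nx \<le> \<epsilon> / (2 * C * nx)"
    proof -
      have "t * nx = min (min d \<delta>) (\<epsilon> / (2 * C * nx)) / 2" unfolding t_def using nx by auto
      also have "\<dots> \<le> \<epsilon> / (2 * C * nx)"
      proof -
        have hb: "\<epsilon> / (2 * C * nx) > 0" using eps C nx by simp
        have "min (min d \<delta>) (\<epsilon> / (2 * C * nx)) \<le> \<epsilon> / (2 * C * nx)" by (rule min.cobounded2)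
        then show ?thesis using hb by (rule half_le)
      qed
      finally show ?thesis .
    qed
    have ntX: "norm (t *\<^sub>R X) = t * norm X" using t0 by simp
    have ntX2: "norm (t *\<^sub>R X) < min d \<delta>"
      using ntX tnx nx t0 by (metis le_less_trans mult_left_mono order.strict_iff_not)
    have e1: "norm (R (P + t *\<^sub>R X) - P - t *\<^sub>R blinfun_apply D X) \<le> (\<epsilon> / (2 * nx)) * (t * norm X)"
      using dH[rule_format, of "P + t *\<^sub>R X"] ntX2 ntX RP t0 by (simp add: blinfun.scaleR_right abs_of_pos)
    have e2: "norm (R (P + t *\<^sub>R X) - P - t *\<^sub>R PiP P X) \<le> C * (t * norm X)\<^sup>2"
      using HC[rule_format, of "t *\<^sub>R X"] ntX2 ntX symm_scale[OF X] t0 by (simp add: PiP_scale abs_of_pos)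
    have "t *\<^sub>R v = (R (P + t *\<^sub>R X) - P - t *\<^sub>R PiP P X) - (R (P + t *\<^sub>R X) - P - t *\<^sub>R blinfun_apply D X)"
      unfolding v_def by (simp add: algebra_simps)
    then have "norm (t *\<^sub>R v) \<le> norm (R (P + t *\<^sub>R X) - P - t *\<^sub>R PiP P X) + norm (R (P + t *\<^sub>R X) - P - t *\<^sub>R blinfun_apply D X)"
      by (metis norm_triangle_ineq4)
    moreover have "norm (t *\<^sub>R v) = t * norm v" using t0 by simp
    moreover have "(\<epsilon> / (2 * nx)) * (t * norm X) = \<epsilon> * (t * norm X) / (2 * nx)" by simp
    ultimately have "t * norm v \<le> (\<epsilon> / (2 * nx)) * (t * norm X) + C * (t * norm X)\<^sup>2"
      using e1 e2 by linarith
    then have "t * norm v \<le> t * ((\<epsilon> / (2 * nx)) * norm X + C * t * (norm X)\<^sup>2)"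
      by (simp add: algebra_simps power2_eq_square)
    then have "norm v \<le> (\<epsilon> / (2 * nx)) * norm X + C * t * (norm X)\<^sup>2"
      using t0 by (rule mult_left_le_imp_le)
    also have "\<dots> \<le> (\<epsilon> / (2 * nx)) * nx + C * (t * nx) * nx"
    proof (intro add_mono mult_left_mono)
      show "C * t * (norm X)\<^sup>2 \<le> C * (t * nx) * nx"
        using nx t0 C by (simp add: power2_eq_square mult_mono)
    qed (use nx eps in auto)
    also have "\<dots> \<le> \<epsilon> / 2 + C * (\<epsilon> / (2 * C * nx)) * nx"
      using nx C tnx2 eps by (intro add_mono mult_right_mono mult_left_mono) auto
    also have "\<dots> = \<epsilon>" using nx C by (simp add: field_simps)
    finally show ?thesis .
  qed
  note nv = this
  have "norm v = 0"
  proof (rule ccontr)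
    assume "norm v \<noteq> 0"
    then have p: "norm v > 0" by simp
    then have "norm v / 2 > 0" by simp
    then have "norm v \<le> norm v / 2" by (rule nv)
    then show False using p by linarith
  qed
  then show ?thesis unfolding v_def by simp
qed



lemma le_eps0:
  assumes "\<And>e. e > 0 \<Longrightarrow> (x::real) \<le> e"
  shows "x \<le> 0"
proof (rule ccontr)
  assume a: "\<not> x \<le> 0"
  then have "x / 2 > 0" by simp
  then have "x \<le> x / 2" by (rule assms)
  then show False using a by linarith
qed

lemma omega_point:
  fixes P :: "nat \<Rightarrow> 'a::metric_space"
  assumes PS: "\<forall>k. P k \<in> S" and cS: "compact S" and fr: "\<forall>n. \<exists>k\<ge>n. P k \<in> M" and cM: "closed M"
  shows "\<exists>x\<in>M. \<forall>n. x \<in> closure (P ` {n..})"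
proof -
  have "infinite {k. P k \<in> M}" using fr unfolding infinite_nat_iff_unbounded_le by auto
  then obtain r :: "nat \<Rightarrow> nat" where r: "strict_mono r" "\<forall>n. r n \<in> {k. P k \<in> M}" using infinite_enumerate by blast
  have "\<forall>n. (P \<circ> r) n \<in> S" using PS by simp
  then obtain l s where l: "l \<in> S" "strict_mono s" "((P \<circ> r) \<circ> s) \<longlonglongrightarrow> l"
    using cS unfolding compact_def by blast
  have rs: "strict_mono (r \<circ> s)" using r(1) l(2) by (simp add: strict_mono_o)
  have "l \<in> M"
  proof (rule Lim_in_closed_set[OF cM _ _ l(3)])
    show "\<forall>\<^sub>F x in sequentially. ((P \<circ> r) \<circ> s) x \<in> M" using r(2) by simp
  qed simp
  moreover have "l \<in> closure (P ` {n..})" for n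
  proof (rule Lim_in_closed_set[OF closed_closure _ _ l(3)])
    show "\<forall>\<^sub>F x in sequentially. ((P \<circ> r) \<circ> s) x \<in> closure (P ` {n..})"
      unfolding eventually_sequentially
    proof (intro exI allI impI)
      fix k assume "n \<le> k"
      then have "n \<le> r (s k)" using seq_suble[OF rs, of k] by simp
      then have "r (s k) \<in> {n..}" by simp
      then have "P (r (s k)) \<in> P ` {n..}" by (rule imageI)
      then have "P (r (s k)) \<in> closure (P ` {n..})" using closure_subset[of "P ` {n..}"] by (rule subsetD[rotated])
      then show "((P \<circ> r) \<circ> s) k \<in> closure (P ` {n..})" by simp
    qed
  qed simp
  ultimately show ?thesis by blast
qed

lemma omega_value:
  fixes P :: "nat \<Rightarrow> 'a::metric_space" and h :: "'a \<Rightarrow> 'b::metric_space"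
  assumes h: "continuous_on UNIV h" and lim: "(\<lambda>k. h (P k)) \<longlonglongrightarrow> c"
    and x: "\<forall>n. x \<in> closure (P ` {n..})"
  shows "h x = c"
proof -
  have "dist (h x) c \<le> e" if e: "e > 0" for e
  proof -
    obtain n0 where n0: "\<forall>k\<ge>n0. dist (h (P k)) c < e"
      using lim e unfolding LIMSEQ_def by blast
    have cl: "closed {y. dist (h y) c \<le> e}"
      by (intro closed_Collect_le continuous_intros h)
    have "P ` {n0..} \<subseteq> {y. dist (h y) c \<le> e}" using n0 by fastforce
    then have "closure (P ` {n0..}) \<subseteq> {y. dist (h y) c \<le> e}" using cl by (rule closure_minimal)
    then show ?thesis using x by blast
  qed
  then have "dist (h x) c \<le> 0" by (rule le_eps0)
  then show ?thesis by simp
qed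

lemma discrete_ivt:
  fixes g :: "nat \<Rightarrow> real"
  shows "g k < a \<Longrightarrow> a \<le> g m \<Longrightarrow> k \<le> m \<Longrightarrow> \<exists>j. k \<le> j \<and> j < m \<and> g j < a \<and> a \<le> g (Suc j)"
proof (induction m)
  case 0 then show ?case by simp
next
  case (Suc m)
  show ?case
  proof (cases "a \<le> g m")
    case True
    have "k \<noteq> Suc m" using Suc.prems by auto
    then have "k \<le> m" using Suc.prems by simp
    then obtain j where "k \<le> j \<and> j < m \<and> g j < a \<and> a \<le> g (Suc j)" using Suc.IH Suc.prems True by blast
    then show ?thesis by (intro exI[of _ j]) auto
  next
    case False
    have "k \<le> m"
    proof (rule ccontr)
      assume "\<not> k \<le> m" then have "k = Suc m" using Suc.prems by simp
      then show False using Suc.prems by simp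
    qed
    then show ?thesis using False Suc.prems by (intro exI[of _ m]) auto
  qed
qed

lemma omega_connected:
  fixes P :: "nat \<Rightarrow> 'a::metric_space"
  assumes PS: "\<forall>k. P k \<in> S" and cS: "compact S"
    and step: "(\<lambda>k. dist (P (Suc k)) (P k)) \<longlonglongrightarrow> 0"
  shows "connected (\<Inter>n. closure (P ` {n..}))"
proof -
  define L where "L = (\<Inter>n. closure (P ` {n..}))"
  have clL: "closed L" unfolding L_def by auto
  have LS: "L \<subseteq> S"
  proof -
    have "closure (P ` {0..}) \<subseteq> S" using PS compact_imp_closed[OF cS] by (intro closure_minimal) auto
    then show ?thesis unfolding L_def by blast
  qed
  have cL: "compact L" using compact_Int_closed[OF cS clL] LS by (simp add: Int_absorb1)
  show ?thesis unfolding L_def[symmetric]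
  proof (rule ccontr)
    assume "\<not> connected L"
    then obtain A B where AB: "closed A" "closed B" "L \<subseteq> A \<union> B" "A \<inter> B \<inter> L = {}" "A \<inter> L \<noteq> {}" "B \<inter> L \<noteq> {}"
      unfolding connected_closed by blast
    define A' where "A' = A \<inter> L"
    define B' where "B' = B \<inter> L"
    have cA: "closed A'" "A' \<noteq> {}" using AB clL unfolding A'_def by auto
    have cB: "closed B'" "B' \<noteq> {}" using AB clL unfolding B'_def by auto
    define f where "f x = infdist x A' - infdist x B'" for x
    have fc: "continuous_on UNIV f" unfolding f_def by (intro continuous_intros)
    have fA: "f x < 0" if "x \<in> A'" for x
    proof -
      have "x \<notin> B'" using that AB unfolding A'_def B'_def by auto
      then have "infdist x B' \<noteq> 0" using in_closed_iff_infdist_zero[OF cB] by simp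
      then have "infdist x B' > 0" using infdist_nonneg[of x B'] by linarith
      moreover have "infdist x A' = 0" using that in_closed_iff_infdist_zero[OF cA] by simp
      ultimately show ?thesis unfolding f_def by simp
    qed
    have fB: "f x > 0" if "x \<in> B'" for x
    proof -
      have "x \<notin> A'" using that AB unfolding A'_def B'_def by auto
      then have "infdist x A' \<noteq> 0" using in_closed_iff_infdist_zero[OF cA] by simp
      then have "infdist x A' > 0" using infdist_nonneg[of x A'] by linarith
      moreover have "infdist x B' = 0" using that in_closed_iff_infdist_zero[OF cB] by simp
      ultimately show ?thesis unfolding f_def by simp
    qed
    have Lne: "L \<noteq> {}" using AB by auto
    have "continuous_on L (\<lambda>x. \<bar>f x\<bar>)" by (intro continuous_intros continuous_on_subset[OF fc]) auto
    then obtain x0 where x0: "x0 \<in> L" "\<forall>y\<in>L. \<bar>f x0\<bar> \<le> \<bar>f y\<bar>"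
      using continuous_attains_inf[OF cL Lne] by blast
    define m where "m = \<bar>f x0\<bar>"
    have m0: "m > 0"
    proof -
      have "x0 \<in> A' \<or> x0 \<in> B'" using x0(1) AB unfolding A'_def B'_def by auto
      then show ?thesis unfolding m_def using fA fB by force
    qed
    have mL: "\<bar>f y\<bar> \<ge> m" if "y \<in> L" for y using x0 that unfolding m_def by blast
    define \<eta> where "\<eta> = m / 2"
    have eta: "\<eta> > 0" "m = 2 * \<eta>" using m0 unfolding \<eta>_def by auto
    have lipf: "\<bar>f x - f y\<bar> \<le> 2 * dist x y" for x y
    proof -
      have "\<bar>infdist x A' - infdist y A'\<bar> \<le> dist x y" by (rule infdist_triangle_abs)
      moreover have "\<bar>infdist x B' - infdist y B'\<bar> \<le> dist x y" by (rule infdist_triangle_abs)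
      ultimately show ?thesis unfolding f_def by linarith
    qed
    obtain n0 where n0: "\<forall>k\<ge>n0. dist (P (Suc k)) (P k) < \<eta> / 2"
      using step eta unfolding LIMSEQ_def by (metis dist_real_def diff_zero abs_of_nonneg zero_le_dist half_gt_zero)
    have jump: "f (P (Suc k)) < f (P k) + \<eta>" if "k \<ge> n0" for k
      using lipf[of "P (Suc k)" "P k"] n0 that by force
    have visit: "\<exists>k\<ge>n. \<bar>f (P k) - f a\<bar> < \<eta>" if a: "a \<in> L" for a n
    proof -
      obtain d where d: "d > 0" "\<forall>y. dist y a < d \<longrightarrow> dist (f y) (f a) < \<eta>"
        using fc eta unfolding continuous_on_iff by blast
      have "a \<in> closure (P ` {n..})" using a unfolding L_def by blast
      then obtain y where "y \<in> P ` {n..}" "dist y a < d" using d(1) unfolding closure_approachable by blast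
      then show ?thesis using d(2) by (auto simp: dist_real_def)
    qed
    obtain a where a: "a \<in> A'" using cA by blast
    obtain b where b: "b \<in> B'" using cB by blast
    have aL: "a \<in> L" "f a \<le> - m" using a fA mL unfolding A'_def by force+
    have bL: "b \<in> L" "f b \<ge> m" using b fB mL unfolding B'_def by force+
    have "\<forall>n. \<exists>k\<ge>n. P k \<in> {x. \<bar>f x\<bar> \<le> \<eta>}"
    proof
      fix n
      obtain k where k: "k \<ge> max n n0" "\<bar>f (P k) - f a\<bar> < \<eta>" using visit[OF aL(1)] by blast
      obtain k' where k': "k' \<ge> k" "\<bar>f (P k') - f b\<bar> < \<eta>" using visit[OF bL(1)] by blast
      have "f (P k) < - \<eta>" using k aL eta by linarith
      moreover have "- \<eta> \<le> f (P k')" using k' bL eta by linarith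
      ultimately obtain j where j: "k \<le> j" "j < k'" "f (P j) < - \<eta>" "- \<eta> \<le> f (P (Suc j))"
        using discrete_ivt[of "\<lambda>i. f (P i)" k "- \<eta>" k'] k'(1) by blast
      have "f (P (Suc j)) < f (P j) + \<eta>" using jump j k by simp
      then have "\<bar>f (P (Suc j))\<bar> \<le> \<eta>" using j eta by linarith
      moreover have "Suc j \<ge> n" using j k by simp
      ultimately show "\<exists>k\<ge>n. P k \<in> {x. \<bar>f x\<bar> \<le> \<eta>}" by blast
    qed
    moreover have "closed {x. \<bar>f x\<bar> \<le> \<eta>}" by (intro closed_Collect_le continuous_intros fc)
    ultimately obtain x where x: "\<bar>f x\<bar> \<le> \<eta>" "\<forall>n. x \<in> closure (P ` {n..})"
      using omega_point[OF PS cS] by blast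
    have "x \<in> L" using x(2) unfolding L_def by blast
    then have "\<bar>f x\<bar> \<ge> 2 * \<eta>" using mL eta by simp
    then show False using x(1) eta by linarith
  qed
qed



lemma symm_add: "symm A \<Longrightarrow> symm B \<Longrightarrow> symm (A + (B::real^'n^'n))"
  by (simp add: symm_def transpose_add)

lemma symm_diff: "symm A \<Longrightarrow> symm B \<Longrightarrow> symm (A - (B::real^'n^'n))"
  by (simp add: symm_def transpose_sub)

lemma uniform_delta:
  fixes R :: "real^'n^'n \<Rightarrow> real^'n^'n"
  assumes cS: "compact S" and Ssym: "\<forall>P\<in>S. symm P"
    and loc: "\<forall>P\<in>S. \<exists>\<delta>>0. \<forall>X. symm X \<and> norm X < \<delta> \<longrightarrow> R (P + X) \<in> T"
  shows "\<exists>\<delta>>0. \<forall>P\<in>S. \<forall>X. symm X \<and> norm X < \<delta> \<longrightarrow> R (P + X) \<in> T"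
proof (cases "S = {}")
  case True then show ?thesis by (intro exI[of _ 1]) auto
next
  case False
  from loc obtain d where d: "\<forall>P\<in>S. d P > 0 \<and> (\<forall>X. symm X \<and> norm X < d P \<longrightarrow> R (P + X) \<in> T)"
    by metis
  have cov: "S \<subseteq> (\<Union>c\<in>S. ball c (d c / 2))" using d by force
  obtain S' where S': "S' \<subseteq> S" "finite S'" "S \<subseteq> (\<Union>c\<in>S'. ball c (d c / 2))"
    using compactE_image[OF cS _ cov] by blast
  have S'ne: "S' \<noteq> {}" using S'(3) False by auto
  define \<delta> where "\<delta> = Min ((\<lambda>c. d c / 2) ` S')"
  have \<delta>pos: "\<delta> > 0" unfolding \<delta>_def using S' S'ne d by (subst Min_gr_iff) auto
  have \<delta>le: "\<delta> \<le> d c / 2" if "c \<in> S'" for c unfolding \<delta>_def using S'(2) that by (intro Min_le) auto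
  show ?thesis
  proof (intro exI[of _ \<delta>] conjI ballI allI impI)
    show "\<delta> > 0" by (rule \<delta>pos)
    fix P X :: "real^'n^'n" assume P: "P \<in> S" and X: "symm X \<and> norm X < \<delta>"
    obtain c where c: "c \<in> S'" "P \<in> ball c (d c / 2)" using S'(3) P by blast
    define Y where "Y = P - c + X"
    have "symm Y" unfolding Y_def using Ssym P c S'(1) X by (intro symm_add symm_diff) auto
    moreover have "norm Y < d c"
    proof -
      have "norm Y \<le> norm (P - c) + norm X" unfolding Y_def by (rule norm_triangle_ineq)
      moreover have "norm (P - c) < d c / 2" using c(2) by (simp add: dist_norm norm_minus_commute)
      moreover have "norm X < d c / 2" using X \<delta>le[OF c(1)] by linarith
      ultimately show ?thesis by linarith
    qed
    ultimately have "R (c + Y) \<in> T" using d c S'(1) by blast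
    then show "R (P + X) \<in> T" unfolding Y_def by (simp add: algebra_simps)
  qed
qed



theorem theorem3p1:
  fixes E :: "real^'n^'n \<Rightarrow> real"
    and R :: "real^'n^'n \<Rightarrow> real^'n^'n"
    and N :: nat
  assumes N: "1 \<le> N" "N \<le> CARD('n)"
    and E_C2: "C2 E"
    and R_C2: "C2 R"
    and R_H: "\<And>A. symm A \<Longrightarrow> symm (R A)"
    and R_retr: "\<And>P. P \<in> MN N \<Longrightarrow> \<exists>\<delta>>0. \<exists>C. \<forall>X. symm X \<and> norm X < \<delta> \<longrightarrow>
                    R (P + X) \<in> MN N \<and> norm (R (P + X) - P - PiP P X) \<le> C * (norm X)\<^sup>2"
  shows "\<exists>\<beta>0>0. \<forall>\<beta> P0. 0 < \<beta> \<and> \<beta> \<le> \<beta>0 \<and> P0 \<in> MN N \<longrightarrow>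
           (let P = rgd_iter E R \<beta> P0 in
             antimono (\<lambda>k. E (P k)) \<and>
             (\<exists>Ec. critical_value N E Ec \<and> (\<lambda>k. E (P k)) \<longlonglongrightarrow> Ec \<and>
                (\<lambda>k. PiP (P k) (gradH E (P k))) \<longlonglongrightarrow> 0 \<and>
                (\<lambda>k. norm (P (Suc k) - P k)) \<longlonglongrightarrow> 0 \<and>
                (\<exists>Ac. Ac \<in> components (crit_set N E Ec) \<and>
                      (\<lambda>k. infdist (P k) Ac) \<longlonglongrightarrow> 0)))"
proof -
  obtain E' E'' where E': "\<forall>x. (E has_derivative blinfun_apply (E' x)) (at x)"
    and E'': "\<forall>x. (E' has_derivative blinfun_apply (E'' x)) (at x)" and E''c: "continuous_on UNIV E''"
    using E_C2 unfolding C2_def by blast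
  obtain R' R'' where R': "\<forall>x. (R has_derivative blinfun_apply (R' x)) (at x)"
    and R'': "\<forall>x. (R' has_derivative blinfun_apply (R'' x)) (at x)" and R''c: "continuous_on UNIV R''"
    using R_C2 unfolding C2_def by blast
  have E'c: "continuous_on UNIV E'" using E'' by (rule C2_cont_deriv)
  have Ec: "continuous_on UNIV E" using E' by (metis continuous_on_eq_continuous_within has_derivative_continuous)
  define S where "S = (MN N :: (real^'n^'n) set)"
  have cS: "compact S" unfolding S_def by (rule compact_MN)
  have Ssym: "\<forall>P\<in>S. symm P" and Sidem: "\<forall>P\<in>S. P ** P = P" unfolding S_def by (auto simp: MN_symm MN_idem)
  have gH: "gradH E A = gradE (E' A)" for A using E' gradH_eq by blast
  have gsym: "symm (gradH E A)" for A unfolding gH by (rule gradE_symm)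
  define v where "v A = PiP A (gradH E A)" for A
  have vc: "continuous_on UNIV v"
    unfolding v_def gH PiP_def by (intro continuous_intros continuous_gradE E'c)
  have gc: "continuous_on UNIV (\<lambda>A. gradH E A)"
    unfolding gH by (intro continuous_gradE E'c)
  define r0 where "r0 = sqrt (real N)"
  have Snorm: "\<forall>P\<in>S. norm P \<le> r0" unfolding S_def r0_def by (auto dest: MN_norm)
  define K where "K = cball (0::real^'n^'n) (r0 + 1)"
  have cK: "compact K" "convex K" unfolding K_def by auto
  have SK: "S \<subseteq> K" using Snorm unfolding K_def by auto
  obtain ME where ME: "ME \<ge> 0" "\<forall>x\<in>K. \<forall>y\<in>K. norm (E y - E x - E' x (y - x)) \<le> ME * (norm (y - x))\<^sup>2"
    using C2_taylor[OF E' E'' E''c cK] by blast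
  obtain MR where MR: "MR \<ge> 0" "\<forall>x\<in>K. \<forall>y\<in>K. norm (R y - R x - R' x (y - x)) \<le> MR * (norm (y - x))\<^sup>2"
    using C2_taylor[OF R' R'' R''c cK] by blast
  obtain Gm where Gm: "Gm > 0" "\<forall>P\<in>S. norm (v P) \<le> Gm"
  proof -
    have "bounded (v ` S)" using cS vc by (meson compact_continuous_image compact_imp_bounded continuous_on_subset subset_UNIV)
    then show ?thesis using that unfolding bounded_pos by blast
  qed
  obtain Gg where Gg: "Gg > 0" "\<forall>P\<in>S. norm (gradH E P) \<le> Gg"
  proof -
    have "bounded ((\<lambda>A. gradH E A) ` S)" using cS gc by (meson compact_continuous_image compact_imp_bounded continuous_on_subset subset_UNIV)
    then show ?thesis using that unfolding bounded_pos by blast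
  qed
  obtain EB where EB: "\<forall>P\<in>S. \<bar>E P\<bar> \<le> EB"
  proof -
    have "bounded (E ` S)" using cS Ec by (meson compact_continuous_image compact_imp_bounded continuous_on_subset subset_UNIV)
    then show ?thesis using that unfolding bounded_pos by force
  qed
  have Rfix: "R P = P" if "P \<in> S" for P using retr_fix R_retr that unfolding S_def by blast
  have R'P: "R' P X = PiP P X" if "P \<in> S" "symm X" for P X
    using retr_deriv R' R_retr that unfolding S_def by blast
  obtain \<delta>0 where \<delta>0: "\<delta>0 > 0" "\<forall>P\<in>S. \<forall>X. symm X \<and> norm X < \<delta>0 \<longrightarrow> R (P + X) \<in> S"
  proof -
    have "\<forall>P\<in>S. \<exists>\<delta>>0. \<forall>X. symm X \<and> norm X < \<delta> \<longrightarrow> R (P + X) \<in> S"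
      using R_retr unfolding S_def by metis
    then show ?thesis using that uniform_delta[OF cS Ssym] by blast
  qed
  define c where "c = Gg * MR + 4 * ME"
  have c0: "c \<ge> 0" unfolding c_def using Gg ME MR by simp
  define \<beta>0 where "\<beta>0 = min (min (\<delta>0 / (2 * Gm)) (1 / Gm)) (min (1 / (MR * Gm + 1)) (1 / (2 * c + 1)))"
  have \<beta>0pos: "\<beta>0 > 0" unfolding \<beta>0_def using \<delta>0 Gm MR c0
    by (simp add: add_nonneg_pos mult_nonneg_nonneg)
  have step: "R (P - \<beta> *\<^sub>R v P) \<in> S \<and> E (R (P - \<beta> *\<^sub>R v P)) \<le> E P - (\<beta> / 2) * (norm (v P))\<^sup>2
      \<and> norm (R (P - \<beta> *\<^sub>R v P) - P) \<le> 2 * \<beta> * norm (v P)"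
    if P: "P \<in> S" and \<beta>: "0 < \<beta>" "\<beta> \<le> \<beta>0" for P \<beta>
  proof -
    have b1: "\<beta> * Gm \<le> \<delta>0 / 2"
    proof -
      have "\<beta> \<le> \<delta>0 / (2 * Gm)" using \<beta> unfolding \<beta>0_def by linarith
      then show ?thesis using Gm by (simp add: field_simps)
    qed
    have b2: "\<beta> * Gm \<le> 1"
    proof -
      have "\<beta> \<le> 1 / Gm" using \<beta> unfolding \<beta>0_def by linarith
      then show ?thesis using Gm by (simp add: field_simps)
    qed
    have b3: "MR * (\<beta> * Gm) \<le> 1"
    proof -
      have "\<beta> \<le> 1 / (MR * Gm + 1)" using \<beta> unfolding \<beta>0_def by linarith
      moreover have "MR * Gm + 1 > 0" using MR Gm by (simp add: add_nonneg_pos)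
      ultimately have "\<beta> * (MR * Gm + 1) \<le> 1" by (simp add: field_simps)
      then show ?thesis using \<beta> by (simp add: algebra_simps)
    qed
    have b4: "\<beta> * c \<le> 1 / 2"
    proof -
      have "\<beta> \<le> 1 / (2 * c + 1)" using \<beta> unfolding \<beta>0_def by linarith
      moreover have "2 * c + 1 > 0" using c0 by simp
      ultimately have "\<beta> * (2 * c + 1) \<le> 1" by (simp add: field_simps)
      then show ?thesis using \<beta> by (simp add: algebra_simps)
    qed
    define g where "g = gradH E P"
    define w where "w = v P"
    have Psym: "symm P" using Ssym P by blast
    have gsy: "symm g" unfolding g_def by (rule gsym)
    have wPi: "w = PiP P g" unfolding w_def v_def g_def ..
    have wsym: "symm w" unfolding wPi by (rule PiP_symm[OF Psym gsy])
    have nw: "norm w \<le> Gm" unfolding w_def using Gm P by blast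
    have nw0: "norm w \<ge> 0" by simp
    define X where "X = (- \<beta>) *\<^sub>R w"
    have Xsym: "symm X" unfolding X_def by (rule symm_scale[OF wsym])
    have nX: "norm X = \<beta> * norm w" unfolding X_def using \<beta> by simp
    have nXle: "norm X \<le> \<beta> * Gm" unfolding nX using nw \<beta> by (simp add: mult_left_mono)
    have PX: "P - \<beta> *\<^sub>R v P = P + X" unfolding X_def w_def by simp
    define P' where "P' = R (P + X)"
    have P'S: "P' \<in> S" unfolding P'_def using \<delta>0(2) P Xsym nXle b1 \<delta>0(1) by force
    have PK: "P \<in> K" using P SK by blast
    have P'K: "P' \<in> K" using P'S SK by blast
    have PXK: "P + X \<in> K"
    proof -
      have "norm (P + X) \<le> norm P + norm X" by (rule norm_triangle_ineq)
      also have "\<dots> \<le> r0 + 1" using Snorm P nXle b2 by force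
      finally show ?thesis unfolding K_def by simp
    qed
    have Rt: "norm (R (P + X) - R P - R' P ((P + X) - P)) \<le> MR * (norm ((P + X) - P))\<^sup>2"
      using MR(2) PK PXK by blast
    have Pw: "PiP P w = w" unfolding wPi using Sidem P by (simp add: PiP_idem)
    have R'X: "R' P X = (- \<beta>) *\<^sub>R w"
      using R'P[OF P Xsym] unfolding X_def PiP_scale Pw by simp
    define Y where "Y = P' - P"
    define r where "r = Y + \<beta> *\<^sub>R w"
    have rdef: "r = R (P + X) - R P - R' P ((P + X) - P)"
      unfolding r_def Y_def P'_def using R'X Rfix[OF P] by simp
    have nr: "norm r \<le> MR * (\<beta> * norm w)\<^sup>2" using Rt unfolding rdef[symmetric] by (simp add: nX)
    have nr2: "MR * (\<beta> * norm w)\<^sup>2 \<le> \<beta> * norm w"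
    proof -
      have "MR * (\<beta> * norm w) \<le> MR * (\<beta> * Gm)" using MR nw \<beta> by (simp add: mult_left_mono)
      then have "MR * (\<beta> * norm w) \<le> 1" using b3 by linarith
      then have "(MR * (\<beta> * norm w)) * (\<beta> * norm w) \<le> 1 * (\<beta> * norm w)"
        using \<beta> nw0 by (intro mult_right_mono) auto
      then show ?thesis by (simp add: power2_eq_square mult_ac)
    qed
    have Yr: "Y = r - \<beta> *\<^sub>R w" unfolding r_def by simp
    have nY: "norm Y \<le> 2 * \<beta> * norm w"
    proof -
      have "norm Y \<le> norm r + norm (\<beta> *\<^sub>R w)" unfolding Yr by (rule norm_triangle_ineq4)
      also have "norm (\<beta> *\<^sub>R w) = \<beta> * norm w" using \<beta> by simp
      finally show ?thesis using nr nr2 by linarith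
    qed
    have Et: "norm (E P' - E P - E' P (P' - P)) \<le> ME * (norm (P' - P))\<^sup>2"
      using ME(2) PK P'K by blast
    have Ysym: "symm Y" unfolding Y_def using P'S Psym Ssym by (intro symm_diff) auto
    have E'Y: "E' P Y = g \<bullet> Y" unfolding g_def gH using gradE_inner[OF Ysym] by simp
    have gw: "g \<bullet> w = (norm w)\<^sup>2" unfolding wPi using PiP_inner_self[OF Psym] Sidem P by blast
    have gr: "g \<bullet> r \<le> Gg * (MR * (\<beta> * norm w)\<^sup>2)"
    proof -
      have "g \<bullet> r \<le> norm g * norm r" by (rule norm_cauchy_schwarz)
      also have "\<dots> \<le> Gg * (MR * (\<beta> * norm w)\<^sup>2)"
        using Gg P nr unfolding g_def by (intro mult_mono) auto
      finally show ?thesis .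
    qed
    have gY: "g \<bullet> Y = - \<beta> * (norm w)\<^sup>2 + g \<bullet> r"
      unfolding Yr inner_diff_right inner_scaleR_right gw by simp
    have EY: "ME * (norm Y)\<^sup>2 \<le> ME * (2 * \<beta> * norm w)\<^sup>2"
      using nY ME(1) by (intro mult_left_mono power_mono) auto
    have "E P' \<le> E P + E' P Y + ME * (norm Y)\<^sup>2"
      using Et unfolding Y_def[symmetric] by (simp add: abs_le_iff)
    also have "\<dots> \<le> E P - \<beta> * (norm w)\<^sup>2 + (Gg * MR + 4 * ME) * \<beta> * (\<beta> * (norm w)\<^sup>2)"
    proof -
      have "Gg * (MR * (\<beta> * norm w)\<^sup>2) + ME * (2 * \<beta> * norm w)\<^sup>2
          = (Gg * MR + 4 * ME) * \<beta> * (\<beta> * (norm w)\<^sup>2)"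
        by (simp add: power2_eq_square algebra_simps)
      then show ?thesis using E'Y gY gr EY by linarith
    qed
    also have "\<dots> \<le> E P - \<beta> * (norm w)\<^sup>2 + (1 / 2) * (\<beta> * (norm w)\<^sup>2)"
    proof -
      have "(Gg * MR + 4 * ME) * \<beta> \<le> 1 / 2" using b4 unfolding c_def by (simp add: mult.commute)
      then have "((Gg * MR + 4 * ME) * \<beta>) * (\<beta> * (norm w)\<^sup>2) \<le> (1 / 2) * (\<beta> * (norm w)\<^sup>2)"
        using \<beta> by (intro mult_right_mono) auto
      then show ?thesis by simp
    qed
    also have "\<dots> = E P - (\<beta> / 2) * (norm w)\<^sup>2" by (simp add: algebra_simps)
    finally have dec: "E P' \<le> E P - (\<beta> / 2) * (norm w)\<^sup>2" .
    show ?thesis unfolding PX using P'S dec nY unfolding P'_def Y_def w_def by simp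
  qed
  show ?thesis
  proof (intro exI[of _ \<beta>0] conjI allI impI)
    show "\<beta>0 > 0" by (rule \<beta>0pos)
    fix \<beta> and P0 :: "real^'n^'n"
    assume H: "0 < \<beta> \<and> \<beta> \<le> \<beta>0 \<and> P0 \<in> MN N"
    then have \<beta>: "0 < \<beta>" "\<beta> \<le> \<beta>0" and P0: "P0 \<in> S" unfolding S_def by auto
    define P where "P = rgd_iter E R \<beta> P0"
    have Psuc: "P (Suc k) = R (P k - \<beta> *\<^sub>R v (P k))" for k
      unfolding P_def v_def by (simp add: Let_def)
    have PS: "P k \<in> S" for k
    proof (induction k)
      case 0 then show ?case using P0 unfolding P_def by simp
    next
      case (Suc k) then show ?case unfolding Psuc using step \<beta> by blast
    qed
    have dec: "E (P (Suc k)) \<le> E (P k) - (\<beta> / 2) * (norm (v (P k)))\<^sup>2" for k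
      unfolding Psuc using step[OF PS \<beta>] by blast
    have stp: "norm (P (Suc k) - P k) \<le> 2 * \<beta> * norm (v (P k))" for k
      unfolding Psuc using step[OF PS \<beta>] by blast
    have anti: "antimono (\<lambda>k. E (P k))"
    proof (rule decseq_SucI)
      fix k have "0 \<le> (\<beta> / 2) * (norm (v (P k)))\<^sup>2" using \<beta> by simp
      then show "E (P (Suc k)) \<le> E (P k)" using dec[of k] by linarith
    qed
    have lowb: "\<forall>k. - EB \<le> E (P k)"
    proof
      fix k have "\<bar>E (P k)\<bar> \<le> EB" using EB PS by blast
      then show "- EB \<le> E (P k)" by linarith
    qed
    obtain Ecv where Ecv: "(\<lambda>k. E (P k)) \<longlonglongrightarrow> Ecv" "\<forall>k. Ecv \<le> E (P k)"
      using decseq_convergent[OF anti lowb] by blast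
    have vsq: "(\<lambda>k. (norm (v (P k)))\<^sup>2) \<longlonglongrightarrow> 0"
    proof (rule tendsto_sandwich[of "\<lambda>k. 0" _ _ "\<lambda>k. (2 / \<beta>) * (E (P k) - E (P (Suc k)))"])
      show "\<forall>\<^sub>F k in sequentially. 0 \<le> (norm (v (P k)))\<^sup>2" by simp
      show "\<forall>\<^sub>F k in sequentially. (norm (v (P k)))\<^sup>2 \<le> (2 / \<beta>) * (E (P k) - E (P (Suc k)))"
      proof (rule always_eventually, rule allI)
        fix k
        have "(\<beta> / 2) * (norm (v (P k)))\<^sup>2 \<le> E (P k) - E (P (Suc k))" using dec[of k] by linarith
        then show "(norm (v (P k)))\<^sup>2 \<le> (2 / \<beta>) * (E (P k) - E (P (Suc k)))"
          using \<beta> by (simp add: field_simps)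
      qed
      show "(\<lambda>k. 0::real) \<longlonglongrightarrow> 0" by simp
      have "(\<lambda>k. E (P (Suc k))) \<longlonglongrightarrow> Ecv" using Ecv(1) by (rule LIMSEQ_Suc)
      then have "(\<lambda>k. (2 / \<beta>) * (E (P k) - E (P (Suc k)))) \<longlonglongrightarrow> (2 / \<beta>) * (Ecv - Ecv)"
        by (intro tendsto_intros Ecv(1))
      then show "(\<lambda>k. (2 / \<beta>) * (E (P k) - E (P (Suc k)))) \<longlonglongrightarrow> 0" by simp
    qed
    have vn: "(\<lambda>k. norm (v (P k))) \<longlonglongrightarrow> 0"
    proof -
      have "(\<lambda>k. sqrt ((norm (v (P k)))\<^sup>2)) \<longlonglongrightarrow> sqrt 0" using vsq by (rule tendsto_real_sqrt)
      then show ?thesis by simp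
    qed
    have vlim: "(\<lambda>k. v (P k)) \<longlonglongrightarrow> 0" using vn by (simp add: tendsto_norm_zero_iff)
    have slim: "(\<lambda>k. norm (P (Suc k) - P k)) \<longlonglongrightarrow> 0"
    proof (rule tendsto_sandwich[of "\<lambda>k. 0" _ _ "\<lambda>k. 2 * \<beta> * norm (v (P k))"])
      show "\<forall>\<^sub>F k in sequentially. 0 \<le> norm (P (Suc k) - P k)" by simp
      show "\<forall>\<^sub>F k in sequentially. norm (P (Suc k) - P k) \<le> 2 * \<beta> * norm (v (P k))"
        using stp by simp
      show "(\<lambda>k. 0::real) \<longlonglongrightarrow> 0" by simp
      have "(\<lambda>k. 2 * \<beta> * norm (v (P k))) \<longlonglongrightarrow> 2 * \<beta> * 0" by (intro tendsto_intros vn)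
      then show "(\<lambda>k. 2 * \<beta> * norm (v (P k))) \<longlonglongrightarrow> 0" by simp
    qed
    define L where "L = (\<Inter>n. closure (P ` {n..}))"
    have LS: "L \<subseteq> S"
    proof -
      have "closure (P ` {0..}) \<subseteq> S" using PS compact_imp_closed[OF cS] by (intro closure_minimal) auto
      then show ?thesis unfolding L_def by blast
    qed
    have Lcrit: "L \<subseteq> crit_set N E Ecv"
    proof
      fix x assume x: "x \<in> L"
      then have xc: "\<forall>n. x \<in> closure (P ` {n..})" unfolding L_def by blast
      have "E x = Ecv" by (rule omega_value[OF Ec Ecv(1) xc])
      moreover have "v x = 0" by (rule omega_value[OF vc vlim xc])
      moreover have "x \<in> MN N" using x LS unfolding S_def by blast
      ultimately show "x \<in> crit_set N E Ecv" unfolding crit_set_def v_def by simp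
    qed
    obtain x0 where x0: "x0 \<in> L"
    proof -
      have "\<forall>n. \<exists>k\<ge>n. P k \<in> UNIV" by blast
      then obtain x where "x \<in> UNIV" "\<forall>n. x \<in> closure (P ` {n..})"
        using omega_point[of P S UNIV] PS cS by blast
      then show ?thesis using that unfolding L_def by blast
    qed
    have Lconn: "connected L" unfolding L_def
    proof (rule omega_connected[of P S])
      show "\<forall>k. P k \<in> S" using PS by blast
      show "compact S" by (rule cS)
      show "(\<lambda>k. dist (P (Suc k)) (P k)) \<longlonglongrightarrow> 0" using slim by (simp add: dist_norm)
    qed
    have crit: "critical_value N E Ecv"
      using Lcrit x0 unfolding critical_value_def critical_point_def crit_set_def by blast
    define Ac where "Ac = connected_component_set (crit_set N E Ecv) x0"
    have Acc: "Ac \<in> components (crit_set N E Ecv)"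
      unfolding Ac_def using Lcrit x0 by (auto simp: components_def)
    have LAc: "L \<subseteq> Ac" unfolding Ac_def
      by (rule connected_component_maximal[OF x0 Lconn Lcrit])
    have Lne: "L \<noteq> {}" using x0 by blast
    have infL: "(\<lambda>k. infdist (P k) L) \<longlonglongrightarrow> 0"
    proof (rule ccontr)
      assume "\<not> (\<lambda>k. infdist (P k) L) \<longlonglongrightarrow> 0"
      then obtain e where e: "e > 0" "\<forall>n. \<exists>k\<ge>n. \<not> norm (infdist (P k) L - 0) < e"
        unfolding LIMSEQ_iff by (metis not_le)
      have "\<forall>n. \<exists>k\<ge>n. P k \<in> {y. e \<le> infdist y L}"
      proof
        fix n
        obtain k where k: "k \<ge> n" "\<not> norm (infdist (P k) L - 0) < e" using e(2) by blast
        have "e \<le> infdist (P k) L" using k(2) infdist_nonneg[of "P k" L] by simp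
        then show "\<exists>k\<ge>n. P k \<in> {y. e \<le> infdist y L}" using k(1) by blast
      qed
      moreover have "closed {y. e \<le> infdist y L}" by (intro closed_Collect_le continuous_intros)
      ultimately obtain x where x: "e \<le> infdist x L" "\<forall>n. x \<in> closure (P ` {n..})"
        using omega_point[OF _ cS] PS by blast
      have "x \<in> L" using x(2) unfolding L_def by blast
      then have "infdist x L = 0" by (rule infdist_zero)
      then show False using x(1) e(1) by simp
    qed
    have infAc: "(\<lambda>k. infdist (P k) Ac) \<longlonglongrightarrow> 0"
    proof (rule tendsto_sandwich[of "\<lambda>k. 0" _ _ "\<lambda>k. infdist (P k) L"])
      show "\<forall>\<^sub>F k in sequentially. 0 \<le> infdist (P k) Ac" by (simp add: infdist_nonneg)
      show "\<forall>\<^sub>F k in sequentially. infdist (P k) Ac \<le> infdist (P k) L"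
        using infdist_mono[OF LAc Lne] by simp
    qed (use infL in auto)
    have vP: "(\<lambda>k. PiP (P k) (gradH E (P k))) \<longlonglongrightarrow> 0" using vlim unfolding v_def .
    show "let P = rgd_iter E R \<beta> P0 in
             antimono (\<lambda>k. E (P k)) \<and>
             (\<exists>Ec. critical_value N E Ec \<and> (\<lambda>k. E (P k)) \<longlonglongrightarrow> Ec \<and>
                (\<lambda>k. PiP (P k) (gradH E (P k))) \<longlonglongrightarrow> 0 \<and>
                (\<lambda>k. norm (P (Suc k) - P k)) \<longlonglongrightarrow> 0 \<and>
                (\<exists>Ac. Ac \<in> components (crit_set N E Ec) \<and>
                      (\<lambda>k. infdist (P k) Ac) \<longlonglongrightarrow> 0))"
      unfolding Let_def P_def[symmetric] using anti crit Ecv(1) vP slim Acc infAc by blast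
  qed
qed

end
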